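(* Let $c\in\mathbb{F}$ and let $V=V_{\mathrm{Vir}}(c,0)=\bigoplus_{n\ge0}V_n$ be the Virasoro vertex algebra with its grading and $\mathcal{H}$-action (described in the context). Then $L_1^{(n)}V_n=0$ for all $n\ge1$.
   Context: $\mathbb{F}$ is an algebraically closed field of odd prime characteristic $p$. $\mathcal{H}$: let $\mathfrak{sl}_2$ over $\mathbb{C}$ have basis $L_{-1},L_0,L_1$ with $[L_1,L_{-1}]=2L_0$, $[L_0,L_{\pm1}]=\mp L_{\pm1}$; put $L_{\pm1}^{(n)}=L_{\pm1}^n/n!$, $L_0^{(n)}=\binom{-2L_0}{n}$ in $U(\mathfrak{sl}_2)$; $U(\mathfrak{sl}_2)_{\mathbb{Z}}$ is the $\mathbb{Z}$-span of the $L_{-1}^{(i)}L_0^{(j)}L_1^{(k)}$, and $\mathcal{H}=\mathbb{F}\otimes_{\mathbb{Z}}U(\mathfrak{sl}_2)_{\mathbb{Z}}$ (Hopf algebra with $\Delta(L_{\pm1}^{(n)})=\sum_iL_{\pm1}^{(n-i)}\otimes L_{\pm1}^{(i)}$, $\Delta(L_0^{(n)})=\sum_iL_0^{(n-i)}\otimes L_0^{(i)}$, $\varepsilon=\delta_{n,0}$). Virasoro setting: $\mathrm{Vir}$ over $\mathbb{F}$ has basis $\{L_n\}_{n\in\mathbb{Z}}\cup\{\mathbf{c}\}$ with $[L_m,L_n]=(m-n)L_{m+n}+\frac12\binom{m+1}{3}\delta_{m+n,0}\mathbf{c}$, $\mathbf{c}$ central. It is an $\mathcal{H}$-module Lie algebra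 via $L_{\pm1}^{(r)}\mathbf{c}=L_0^{(r)}\mathbf{c}=\delta_{r,0}\mathbf{c}$, $L_{-1}^{(r)}(L_n)=(-1)^r\binom{n+1}{r}L_{n-r}$, $L_1^{(r)}(L_n)=\binom{-n+1}{r}L_{n+r}$, $L_0^{(r)}(L_n)=\binom{2n}{r}L_n$, extended to make $U(\mathrm{Vir})$ an $\mathcal{H}$-module algebra ($b(xy)=\sum(b^{(1)}x)(b^{(2)}y)$, where $\Delta(b)=\sum b^{(1)}\otimes b^{(2)}$). $V_{\mathrm{Vir}}(c,0)=U(\mathrm{Vir})/J_c$, where $J_c$ is the left ideal generated by $\mathbf{c}-c$ and $L_n$ ($n\ge-1$); $J_c$ is an $\mathcal{H}$-submodule, giving the $\mathcal{H}$-action on $V_{\mathrm{Vir}}(c,0)$. The grading is $\deg\mathbf{1}=0$, $\deg L_n=-n$, so $V_n$ is spanned by $L_{-s_1}\cdots L_{-s_r}\mathbf{1}$ with $s_i\ge2$, $\sum s_i=n$, where $\mathbf{1}=1+J_c$. *)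

theory Defs
  imports "HOL-Computational_Algebra.Polynomial"
begin

datatype vgen = L int | C

text \<open>Elements of the tensor algebra T(Vir) over a field: functions from words in the
  generators to coefficients (finite support is required where relevant).\<close>
type_synonym 'a tens = "vgen list \<Rightarrow> 'a"

definition ibinom :: "int \<Rightarrow> nat \<Rightarrow> int" where
  "ibinom a r = (if 0 \<le> a then int (nat a choose r)
                 else (-1) ^ r * int ((nat (- a) + r - 1) choose r))"

definition mon :: "vgen list \<Rightarrow> 'a::zero_neq_one tens" where
  "mon w = (\<lambda>u. if u = w then 1 else 0)"

definition tmul :: "'a::semiring_0 tens \<Rightarrow> 'a tens \<Rightarrow> 'a tens" where
  "tmul x y = (\<lambda>w. \<Sum>k\<le>length w. x (take k w) * y (drop k w))"

definition tsmult :: "'a::times \<Rightarrow> 'a tens \<Rightarrow> 'a tens" where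
  "tsmult a x = (\<lambda>w. a * x w)"

fun vbr :: "vgen \<Rightarrow> vgen \<Rightarrow> 'a::field tens" where
  "vbr (L m) (L n) = (\<lambda>w. of_int (m - n) * mon [L (m + n)] w
       + (if m + n = 0 then (1/2) * of_int (ibinom (m + 1) 3) * mon [C] w else 0))"
| "vbr _ _ = (\<lambda>w. 0)"

text \<open>The kernel of T(Vir) \<rightarrow> V_Vir(c,0) = U(Vir)/J_c: the span of the two-sided ideal
  defining U(Vir) together with the (preimage of the) left ideal J_c.\<close>
inductive_set vacK :: "'a::field \<Rightarrow> 'a tens set" for c :: "'a" where
  zero: "(\<lambda>w. 0) \<in> vacK c"
| add: "x \<in> vacK c \<Longrightarrow> y \<in> vacK c \<Longrightarrow> (\<lambda>w. x w + y w) \<in> vacK c"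
| smult: "x \<in> vacK c \<Longrightarrow> tsmult a x \<in> vacK c"
| comm: "tmul (mon u) (tmul (\<lambda>w. mon [g, h] w - mon [h, g] w - vbr g h w) (mon v)) \<in> vacK c"
| central: "tmul (mon u) (\<lambda>w. mon [C] w - c * mon [] w) \<in> vacK c"
| annih: "n \<ge> -1 \<Longrightarrow> mon (u @ [L n]) \<in> vacK c"

fun gdeg :: "vgen \<Rightarrow> int" where
  "gdeg (L n) = - n"
| "gdeg C = 0"

definition wdeg :: "vgen list \<Rightarrow> int" where
  "wdeg w = sum_list (map gdeg w)"

text \<open>Tensors representing elements of V_n: finite support, homogeneous of degree n.\<close>
definition homog :: "int \<Rightarrow> 'a::zero tens \<Rightarrow> bool" where
  "homog n x \<longleftrightarrow> finite {w. x w \<noteq> 0} \<and> (\<forall>w. x w \<noteq> 0 \<longrightarrow> wdeg w = n)"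

fun act1g :: "nat \<Rightarrow> vgen \<Rightarrow> 'a::field tens" where
  "act1g r (L m) = tsmult (of_int (ibinom (1 - m) r)) (mon [L (m + int r)])"
| "act1g r C = (if r = 0 then mon [C] else (\<lambda>w. 0))"

text \<open>Extension to words via the coproduct Delta(L_1^{(r)}) = sum_i L_1^{(r-i)} \<otimes> L_1^{(i)}
  (module-algebra property), with L_1^{(r)} 1 = delta_{r,0} 1.\<close>
fun act1w :: "nat \<Rightarrow> vgen list \<Rightarrow> 'a::field tens" where
  "act1w r [] = (if r = 0 then mon [] else (\<lambda>w. 0))"
| "act1w r (g # ws) = (\<lambda>w. \<Sum>i\<le>r. tmul (act1g i g) (act1w (r - i) ws) w)"

definition act1 :: "nat \<Rightarrow> 'a::field tens \<Rightarrow> 'a tens" where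
  "act1 r x = (\<lambda>w. \<Sum>u\<in>{u. x u \<noteq> 0}. x u * act1w r u w)"

definition alg_closed_type :: "'a::field itself \<Rightarrow> bool" where
  "alg_closed_type _ \<longleftrightarrow> (\<forall>q :: 'a poly. degree q \<noteq> 0 \<longrightarrow> (\<exists>z. poly q z = 0))"

end

theory Submission imports Defs begin

lemma take_drop_split_iff:
  assumes "k \<le> length w"
  shows "(take k w = u \<and> drop k w = v) \<longleftrightarrow> (k = length u \<and> w = u @ v)"
proof
  assume "take k w = u \<and> drop k w = v"
  then show "k = length u \<and> w = u @ v" using assms
    by (metis append_take_drop_id length_take min_absorb2)
next
  assume "k = length u \<and> w = u @ v"
  then show "take k w = u \<and> drop k w = v" by simp
qed

lemma tmul_mon_mon: "tmul (mon u) (mon v) = (mon (u @ v) :: 'a::field tens)"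
proof
  fix w :: "vgen list"
  have "tmul (mon u) (mon v) w = (\<Sum>k\<le>length w. (if k = length u \<and> w = u @ v then 1 else 0::'a))"
    unfolding tmul_def mon_def
    by (rule sum.cong) (simp_all add: take_drop_split_iff[symmetric])
  also have "\<dots> = mon (u @ v) w"
    by (auto simp: mon_def)
  finally show "tmul (mon u) (mon v) w = (mon (u @ v) w :: 'a)" .
qed

lemma tri_sum: "(\<Sum>j\<le>n. \<Sum>l\<le>n - j. G j l) = (\<Sum>(j,l)\<in>{(j,l). j + l \<le> (n::nat)}. G j l)"
proof -
  have e: "{(j,l). j + l \<le> n} = Sigma {..n} (\<lambda>j. {..n - j})" by auto
  show ?thesis unfolding e by (simp add: sum.Sigma)
qed

lemma tri_swap: "(\<Sum>j\<le>n. \<Sum>l\<le>n - j. G j l) = (\<Sum>l\<le>n. \<Sum>j\<le>n - l. G j (l::nat))"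
proof -
  have "(\<Sum>l\<le>n. \<Sum>j\<le>n - l. G j l) = (\<Sum>(l,j)\<in>{(l,j). l + j \<le> (n::nat)}. G j l)"
    by (rule tri_sum)
  also have "\<dots> = (\<Sum>(j,l)\<in>{(j,l). j + l \<le> (n::nat)}. G j l)"
    by (rule sum.reindex_bij_witness[where i="\<lambda>(a,b). (b,a)" and j="\<lambda>(a,b). (b,a)"]) auto
  finally show ?thesis by (simp add: tri_sum)
qed

lemma tmul_assoc: "tmul (tmul x y) z = tmul x (tmul y z :: 'a::field tens)"
proof
  fix w :: "vgen list"
  define n where "n = length w"
  define G where "G j l = x (take j w) * y (take l (drop j w)) * z (drop (j + l) w)" for j l
  have "tmul (tmul x y) z w = (\<Sum>k\<le>n. \<Sum>j\<le>k. G j (k - j))"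
    unfolding tmul_def n_def G_def
    by (rule sum.cong) (auto simp: sum_distrib_right min_def take_drop intro!: sum.cong)
  also have "\<dots> = (\<Sum>(j,l)\<in>{(j,l). j + l \<le> n}. G j l)"
    by (rule sum.triangle_reindex_eq[symmetric])
  also have "\<dots> = (\<Sum>j\<le>n. \<Sum>l\<le>n - j. G j l)"
    by (rule tri_sum[symmetric])
  also have "\<dots> = tmul x (tmul y z) w"
    unfolding tmul_def n_def G_def
    by (rule sum.cong) (auto simp: sum_distrib_left mult.assoc add.commute)
  finally show "tmul (tmul x y) z w = tmul x (tmul y z) w" .
qed

lemma tmul_sum_left: "tmul (\<lambda>w. \<Sum>i\<in>S. f i w) y = (\<lambda>w. \<Sum>i\<in>S. tmul (f i) y w)"
  unfolding tmul_def by (simp add: sum_distrib_right, rule ext, rule sum.swap)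

lemma tmul_sum_right: "tmul y (\<lambda>w. \<Sum>i\<in>S. f i w) = (\<lambda>w. \<Sum>i\<in>S. tmul y (f i) w)"
  unfolding tmul_def by (simp add: sum_distrib_left, rule ext, rule sum.swap)

lemma tmul_add_left: "tmul (\<lambda>w. x w + y w) z = (\<lambda>w. tmul x z w + tmul y z w)"
  unfolding tmul_def by (simp add: distrib_right sum.distrib)

lemma tmul_add_right: "tmul z (\<lambda>w. x w + y w) = (\<lambda>w. tmul z x w + tmul z y w)"
  unfolding tmul_def by (simp add: distrib_left sum.distrib)

lemma tmul_diff_left: "tmul (\<lambda>w. x w - y w) z = (\<lambda>w. tmul x z w - tmul y z w :: 'a::field)"
  unfolding tmul_def by (simp add: left_diff_distrib sum_subtractf)

lemma tmul_diff_right: "tmul z (\<lambda>w. x w - y w) = (\<lambda>w. tmul z x w - tmul z y w :: 'a::field)"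
  unfolding tmul_def by (simp add: right_diff_distrib sum_subtractf)

lemma tmul_smult_left: "tmul (\<lambda>w. a * x w) y = (\<lambda>w. a * tmul x y w :: 'a::field)"
  unfolding tmul_def by (simp add: sum_distrib_left mult.assoc)

lemma tmul_smult_right: "tmul x (\<lambda>w. a * y w) = (\<lambda>w. a * tmul x y w :: 'a::field)"
  unfolding tmul_def by (simp add: sum_distrib_left mult.assoc mult.left_commute)

lemma tmul_zero_left: "tmul (\<lambda>w. 0) y = (\<lambda>w. 0 :: 'a::field)"
  unfolding tmul_def by simp

lemma tmul_zero_right: "tmul y (\<lambda>w. 0) = (\<lambda>w. 0 :: 'a::field)"
  unfolding tmul_def by simp

lemma tmul_nil_left: "tmul (mon []) y = (y :: 'a::field tens)"
proof
  fix w :: "vgen list"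
  have "tmul (mon []) y w = (\<Sum>k\<le>length w. if k = 0 then y w else 0)"
    unfolding tmul_def mon_def by (rule sum.cong) auto
  then show "tmul (mon []) y w = y w" by simp
qed

lemma tmul_nil_right: "tmul y (mon []) = (y :: 'a::field tens)"
proof
  fix w :: "vgen list"
  have "tmul y (mon []) w = (\<Sum>k\<le>length w. if k = length w then y w else 0)"
    unfolding tmul_def mon_def by (rule sum.cong) auto
  then show "tmul y (mon []) w = y w" by simp
qed

definition fs :: "'a::zero tens \<Rightarrow> bool" where
  "fs x \<longleftrightarrow> finite {w. x w \<noteq> 0}"

lemma fs_mon: "fs (mon u :: 'a::field tens)"
proof -
  have "{w. (mon u :: 'a tens) w \<noteq> 0} \<subseteq> {u}" by (auto simp: mon_def)
  then show ?thesis unfolding fs_def by (rule finite_subset) simp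
qed

lemma fs_zero: "fs (\<lambda>w. 0)" by (simp add: fs_def)

lemma fs_add: "fs x \<Longrightarrow> fs y \<Longrightarrow> fs (\<lambda>w. x w + y w :: 'a::field)"
  unfolding fs_def by (rule finite_subset[of _ "{w. x w \<noteq> 0} \<union> {w. y w \<noteq> 0}"]) auto

lemma fs_diff: "fs x \<Longrightarrow> fs y \<Longrightarrow> fs (\<lambda>w. x w - y w :: 'a::field)"
  unfolding fs_def by (rule finite_subset[of _ "{w. x w \<noteq> 0} \<union> {w. y w \<noteq> 0}"]) auto

lemma fs_smult: "fs x \<Longrightarrow> fs (\<lambda>w. a * x w :: 'a::field)"
  unfolding fs_def by (rule finite_subset[of _ "{w. x w \<noteq> 0}"]) auto

lemma fs_sum: "finite S \<Longrightarrow> (\<And>i. i \<in> S \<Longrightarrow> fs (f i)) \<Longrightarrow> fs (\<lambda>w. \<Sum>i\<in>S. f i w :: 'a::field)"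
proof (induction S rule: finite_induct)
  case empty then show ?case by (simp add: fs_zero)
next
  case (insert a F)
  then show ?case by (simp add: fs_add)
qed

lemma fs_tmul: "fs x \<Longrightarrow> fs y \<Longrightarrow> fs (tmul x y :: 'a::field tens)"
proof -
  assume fx: "fs x" and fy: "fs y"
  have "{w. tmul x y w \<noteq> 0} \<subseteq> (\<lambda>(u,v). u @ v) ` ({w. x w \<noteq> 0} \<times> {w. y w \<noteq> 0})"
  proof
    fix w assume "w \<in> {w. tmul x y w \<noteq> 0}"
    then obtain k where "x (take k w) * y (drop k w) \<noteq> 0"
      unfolding tmul_def by (auto elim: sum.not_neutral_contains_not_neutral)
    then show "w \<in> (\<lambda>(u,v). u @ v) ` ({w. x w \<noteq> 0} \<times> {w. y w \<noteq> 0})"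
      by (auto intro!: image_eqI[where x="(take k w, drop k w)"])
  qed
  moreover have "finite ((\<lambda>(u,v). u @ v) ` ({w. x w \<noteq> 0} \<times> {w. y w \<noteq> 0}))"
    using fx fy unfolding fs_def by simp
  ultimately show ?thesis unfolding fs_def by (rule finite_subset)
qed

lemma decomp: "fs x \<Longrightarrow> x = (\<lambda>w. \<Sum>u\<in>{w. x w \<noteq> 0}. x u * mon u w :: 'a::field)"
proof
  fix w assume f: "fs x"
  have "(\<Sum>u\<in>{w. x w \<noteq> 0}. x u * mon u w) = (\<Sum>u\<in>{w. x w \<noteq> 0}. if u = w then x w else 0)"
    by (rule sum.cong) (auto simp: mon_def)
  also have "\<dots> = x w" using f unfolding fs_def by (simp add: sum.delta')
  finally show "x w = (\<Sum>u\<in>{w. x w \<noteq> 0}. x u * mon u w)" by simp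
qed

lemma act1_sup: "finite S \<Longrightarrow> {w. x w \<noteq> 0} \<subseteq> S \<Longrightarrow> act1 r x = (\<lambda>w. \<Sum>u\<in>S. x u * act1w r u w :: 'a::field)"
  unfolding act1_def by (rule ext, rule sum.mono_neutral_left) auto

lemma act1_add: "fs x \<Longrightarrow> fs y \<Longrightarrow> act1 r (\<lambda>w. x w + y w) = (\<lambda>w. act1 r x w + act1 r y w :: 'a::field)"
proof -
  assume fx: "fs x" and fy: "fs y"
  let ?S = "{w. x w \<noteq> 0} \<union> {w. y w \<noteq> 0}"
  have fS: "finite ?S" using fx fy by (simp add: fs_def)
  have "act1 r (\<lambda>w. x w + y w) = (\<lambda>w. \<Sum>u\<in>?S. (x u + y u) * act1w r u w)"
    by (rule act1_sup[OF fS]) auto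
  also have "\<dots> = (\<lambda>w. (\<Sum>u\<in>?S. x u * act1w r u w) + (\<Sum>u\<in>?S. y u * act1w r u w))"
    by (simp add: distrib_right sum.distrib)
  also have "\<dots> = (\<lambda>w. act1 r x w + act1 r y w)"
    by (simp add: act1_sup[OF fS, of x] act1_sup[OF fS, of y])
  finally show ?thesis .
qed

lemma act1_smult: "fs x \<Longrightarrow> act1 r (\<lambda>w. a * x w) = (\<lambda>w. a * act1 r x w :: 'a::field)"
proof -
  assume fx: "fs x"
  let ?S = "{w. x w \<noteq> 0}"
  have fS: "finite ?S" using fx by (simp add: fs_def)
  have "act1 r (\<lambda>w. a * x w) = (\<lambda>w. \<Sum>u\<in>?S. (a * x u) * act1w r u w)"
    by (rule act1_sup[OF fS]) auto
  also have "\<dots> = (\<lambda>w. a * act1 r x w)"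
    by (simp add: act1_sup[OF fS, of x] sum_distrib_left mult.assoc)
  finally show ?thesis .
qed

lemma act1_zero: "act1 r (\<lambda>w. 0) = (\<lambda>w. 0 :: 'a::field)"
  unfolding act1_def by simp

lemma act1_diff: "fs x \<Longrightarrow> fs y \<Longrightarrow> act1 r (\<lambda>w. x w - y w) = (\<lambda>w. act1 r x w - act1 r y w :: 'a::field)"
proof -
  assume fx: "fs x" and fy: "fs y"
  let ?S = "{w. x w \<noteq> 0} \<union> {w. y w \<noteq> 0}"
  have fS: "finite ?S" using fx fy by (simp add: fs_def)
  have "act1 r (\<lambda>w. x w - y w) = (\<lambda>w. \<Sum>u\<in>?S. (x u - y u) * act1w r u w)"
    by (rule act1_sup[OF fS]) auto
  also have "\<dots> = (\<lambda>w. (\<Sum>u\<in>?S. x u * act1w r u w) - (\<Sum>u\<in>?S. y u * act1w r u w))"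
    by (simp add: left_diff_distrib sum_subtractf)
  also have "\<dots> = (\<lambda>w. act1 r x w - act1 r y w)"
    by (simp add: act1_sup[OF fS, of x] act1_sup[OF fS, of y])
  finally show ?thesis .
qed

lemma act1_sum: "finite S \<Longrightarrow> (\<And>i. i \<in> S \<Longrightarrow> fs (f i)) \<Longrightarrow>
   act1 r (\<lambda>w. \<Sum>i\<in>S. f i w) = (\<lambda>w. \<Sum>i\<in>S. act1 r (f i) w :: 'a::field)"
proof (induction S rule: finite_induct)
  case empty then show ?case by (simp add: act1_zero)
next
  case (insert a F)
  have "act1 r (\<lambda>w. \<Sum>i\<in>insert a F. f i w) = act1 r (\<lambda>w. f a w + (\<Sum>i\<in>F. f i w))"
    using insert by simp
  also have "\<dots> = (\<lambda>w. act1 r (f a) w + act1 r (\<lambda>w. \<Sum>i\<in>F. f i w) w)"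
    by (rule act1_add) (use insert in \<open>auto intro: fs_sum\<close>)
  finally show ?case using insert by simp
qed

lemma act1_mon: "act1 r (mon u) = (act1w r u :: 'a::field tens)"
proof -
  have "act1 r (mon u) = (\<lambda>w. \<Sum>u'\<in>{u}. (mon u :: 'a tens) u' * act1w r u' w)"
    by (rule act1_sup) (auto simp: mon_def)
  then show ?thesis by (simp add: mon_def)
qed

lemma tsmult_eq: "tsmult a x = (\<lambda>w. a * x w)" by (simp add: tsmult_def)

lemma fs_act1g: "fs (act1g i g :: 'a::field tens)"
  by (cases g) (auto simp: tsmult_eq fs_smult fs_mon fs_zero)

lemma fs_act1w: "fs (act1w r u :: 'a::field tens)"
proof (induction u arbitrary: r)
  case Nil then show ?case by (simp add: fs_mon fs_zero)
next
  case (Cons g u) then show ?case by (simp add: fs_sum fs_tmul fs_act1g)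
qed

lemma act1w_nil: "act1w r [] = (if 0 < r then (\<lambda>w. 0) else mon [])" by simp

lemma act1w_single: "act1w r [g] = (act1g r g :: 'a::field tens)"
proof
  fix w
  have "act1w r [g] w = (\<Sum>i\<le>r. tmul (act1g i g) (act1w (r-i) []) w :: 'a)" by simp
  also have "\<dots> = (\<Sum>i\<le>r. if i = r then (act1g r g w :: 'a) else 0)"
    by (rule sum.cong) (auto simp: tmul_nil_right tmul_zero_right)
  finally show "act1w r [g] w = (act1g r g w :: 'a)" by simp
qed

lemma leibniz_w: "act1w r (u @ v) = (\<lambda>w. \<Sum>i\<le>r. tmul (act1w (r - i) u) (act1w i v) w :: 'a::field)"
proof (induction u arbitrary: r)
  case Nil
  show ?case
  proof
    fix w
    have "(\<Sum>i\<le>r. tmul (act1w (r - i) []) (act1w i v) w) = (\<Sum>i\<le>r. if i = r then (act1w r v w :: 'a) else 0)"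
      by (rule sum.cong) (auto simp: tmul_nil_left tmul_zero_left)
    then show "act1w r ([] @ v) w = (\<Sum>i\<le>r. tmul (act1w (r - i) []) (act1w i v) w :: 'a)" by simp
  qed
next
  case (Cons g u)
  show ?case
  proof
    fix w
    have "act1w r ((g # u) @ v) w = (\<Sum>a\<le>r. tmul (act1g a g) (act1w (r - a) (u @ v)) w :: 'a)"
      by simp
    also have "\<dots> = (\<Sum>a\<le>r. \<Sum>i\<le>r - a. tmul (tmul (act1g a g) (act1w (r - a - i) u)) (act1w i v) w)"
      by (simp add: Cons.IH tmul_sum_right tmul_assoc)
    also have "\<dots> = (\<Sum>i\<le>r. \<Sum>a\<le>r - i. tmul (tmul (act1g a g) (act1w (r - a - i) u)) (act1w i v) w)"
      by (rule tri_swap)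
    also have "\<dots> = (\<Sum>i\<le>r. tmul (act1w (r - i) (g # u)) (act1w i v) w)"
      by (simp add: tmul_sum_left diff_commute add.commute)
    finally show "act1w r ((g # u) @ v) w = (\<Sum>i\<le>r. tmul (act1w (r - i) (g # u)) (act1w i v) w :: 'a)" .
  qed
qed

lemma tmul_expand:
  assumes fx: "fs x" and fy: "fs y"
  shows "tmul x y = (\<lambda>w. \<Sum>u\<in>{w. x w \<noteq> 0}. \<Sum>v\<in>{w. y w \<noteq> 0}. (x u * y v) * mon (u @ v) w :: 'a::field)"
proof -
  have "tmul x y = tmul (\<lambda>w. \<Sum>u\<in>{w. x w \<noteq> 0}. x u * mon u w) (\<lambda>w. \<Sum>v\<in>{w. y w \<noteq> 0}. y v * mon v w)"
    using decomp[OF fx] decomp[OF fy] by simp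
  also have "\<dots> = (\<lambda>w. \<Sum>u\<in>{w. x w \<noteq> 0}. \<Sum>v\<in>{w. y w \<noteq> 0}. (x u * y v) * mon (u @ v) w)"
    by (simp add: tmul_sum_left tmul_sum_right tmul_smult_left tmul_smult_right tmul_mon_mon mult.assoc)
  finally show ?thesis .
qed

lemma act1_expand: "act1 r x = (\<lambda>w. \<Sum>u\<in>{w. x w \<noteq> 0}. x u * act1w r u w :: 'a::field)"
  by (simp add: act1_def)

lemma leibniz:
  assumes fx: "fs x" and fy: "fs y"
  shows "act1 r (tmul x y) = (\<lambda>w. \<Sum>i\<le>r. tmul (act1 (r - i) x) (act1 i y) w :: 'a::field)"
proof -
  let ?Sx = "{w. x w \<noteq> 0}" and ?Sy = "{w. y w \<noteq> 0}"
  have fSx: "finite ?Sx" and fSy: "finite ?Sy" using fx fy by (auto simp: fs_def)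
  have "act1 r (tmul x y) = act1 r (\<lambda>w. \<Sum>u\<in>?Sx. \<Sum>v\<in>?Sy. (x u * y v) * mon (u @ v) w)"
    by (simp add: tmul_expand[OF fx fy])
  also have "\<dots> = (\<lambda>w. \<Sum>u\<in>?Sx. act1 r (\<lambda>w. \<Sum>v\<in>?Sy. (x u * y v) * mon (u @ v) w) w)"
    by (rule act1_sum[OF fSx]) (auto intro!: fs_sum fs_smult fs_mon fSy)
  also have "\<dots> = (\<lambda>w. \<Sum>u\<in>?Sx. \<Sum>v\<in>?Sy. (x u * y v) * act1w r (u @ v) w)"
    by (simp add: act1_sum[OF fSy] fs_smult fs_mon act1_smult act1_mon)
  also have "\<dots> = (\<lambda>w. \<Sum>u\<in>?Sx. \<Sum>v\<in>?Sy. \<Sum>i\<le>r. (x u * y v) * tmul (act1w (r - i) u) (act1w i v) w)"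
    by (simp add: leibniz_w sum_distrib_left)
  also have "\<dots> = (\<lambda>w. \<Sum>i\<le>r. \<Sum>u\<in>?Sx. \<Sum>v\<in>?Sy. (x u * y v) * tmul (act1w (r - i) u) (act1w i v) w)"
    apply (rule ext)
    apply (rule trans[OF sum.cong[OF refl sum.swap]])
    apply (rule sum.swap)
    done
  also have "\<dots> = (\<lambda>w. \<Sum>i\<le>r. tmul (act1 (r - i) x) (act1 i y) w)"
    by (simp add: act1_expand[of _ x] act1_expand[of _ y] tmul_sum_left tmul_sum_right
        tmul_smult_left tmul_smult_right sum_distrib_left mult.assoc)
  finally show ?thesis .
qed

definition rel :: "vgen \<Rightarrow> vgen \<Rightarrow> 'a::field tens" where
  "rel g h = (\<lambda>w. mon [g, h] w - mon [h, g] w - vbr g h w)"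

lemma fs_vbr: "fs (vbr g h :: 'a::field tens)"
proof (cases "\<exists>m n. g = L m \<and> h = L n")
  case True
  then obtain m n where gh: "g = L m" "h = L n" by auto
  have f2: "fs (\<lambda>w. if m + n = 0 then (1/2) * of_int (ibinom (m + 1) 3) * (mon [C] w :: 'a) else 0)"
  proof (cases "m + n = 0")
    case True
    have "(\<lambda>w. if m + n = 0 then (1/2) * of_int (ibinom (m + 1) 3) * (mon [C] w :: 'a) else 0)
        = (\<lambda>w. ((1/2) * of_int (ibinom (m + 1) 3)) * (mon [C] w :: 'a))" using True by simp
    then show ?thesis using fs_smult[OF fs_mon[of "[C]"]] by metis
  next
    case False then show ?thesis by (simp add: fs_zero)
  qed
  have "fs (\<lambda>w. of_int (m - n) * mon [L (m + n)] w + (if m + n = 0 then (1/2) * of_int (ibinom (m + 1) 3) * (mon [C] w :: 'a) else 0))"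
    by (rule fs_add[OF fs_smult[OF fs_mon] f2])
  then show ?thesis using gh by simp
next
  case False
  then have "vbr g h = (\<lambda>w. 0 :: 'a)" by (cases g; cases h) auto
  then show ?thesis by (simp add: fs_zero)
qed

lemma fs_rel: "fs (rel g h :: 'a::field tens)"
  unfolding rel_def by (intro fs_diff fs_mon fs_vbr)

lemma vacK_fs: "z \<in> vacK c \<Longrightarrow> fs z"
proof (induction rule: vacK.induct)
  case zero then show ?case by (rule fs_zero)
next
  case (add x y) then show ?case by (simp add: fs_add)
next
  case (smult x a) then show ?case by (simp add: tsmult_eq fs_smult)
next
  case (comm u g h v) then show ?case
    by (intro fs_tmul fs_mon) (rule fs_rel[unfolded rel_def])
next
  case (central u) then show ?case
    by (intro fs_tmul fs_mon fs_diff fs_smult)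
next
  case (annih n u) then show ?case by (simp add: fs_mon)
qed

lemma vacK_smult': "x \<in> vacK c \<Longrightarrow> (\<lambda>w. a * x w) \<in> vacK c"
  using vacK.smult[of x c a] by (simp add: tsmult_eq)

lemma vacK_diff: "x \<in> vacK c \<Longrightarrow> y \<in> vacK c \<Longrightarrow> (\<lambda>w. x w - y w) \<in> vacK c"
  using vacK.add[of x c "\<lambda>w. (-1) * y w"] vacK_smult'[of y c "-1"] by simp

lemma vacK_sum: "finite S \<Longrightarrow> (\<And>i. i \<in> S \<Longrightarrow> f i \<in> vacK c) \<Longrightarrow> (\<lambda>w. \<Sum>i\<in>S. f i w) \<in> vacK c"
proof (induction S rule: finite_induct)
  case empty then show ?case by (simp add: vacK.zero)
next
  case (insert a F)
  then show ?case using vacK.add[of "f a" c "\<lambda>w. \<Sum>i\<in>F. f i w"] by simp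
qed

lemma vacK_eq: "x \<in> vacK c \<Longrightarrow> x = y \<Longrightarrow> y \<in> vacK c" by simp

inductive_set relspan :: "'a::field tens set" where
  rzero: "(\<lambda>w. 0) \<in> relspan"
| radd: "x \<in> relspan \<Longrightarrow> y \<in> relspan \<Longrightarrow> (\<lambda>w. x w + y w) \<in> relspan"
| rsmult: "x \<in> relspan \<Longrightarrow> (\<lambda>w. a * x w) \<in> relspan"
| rgen: "rel g h \<in> relspan"

lemma relspan_fs: "x \<in> relspan \<Longrightarrow> fs x"
  by (induction rule: relspan.induct) (auto intro: fs_zero fs_add fs_smult fs_rel)

lemma relspan_sum: "finite S \<Longrightarrow> (\<And>i. i \<in> S \<Longrightarrow> f i \<in> relspan) \<Longrightarrow> (\<lambda>w. \<Sum>i\<in>S. f i w) \<in> relspan"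
proof (induction S rule: finite_induct)
  case empty then show ?case by (simp add: rzero)
next
  case (insert a F)
  then show ?case using radd[of "f a" "\<lambda>w. \<Sum>i\<in>F. f i w"] by simp
qed

lemma sandwich:
  assumes "x \<in> relspan" and fp: "fs p" and fq: "fs q"
  shows "tmul p (tmul x q) \<in> vacK c"
  using assms(1)
proof (induction rule: relspan.induct)
  case rzero then show ?case by (simp add: tmul_zero_left tmul_zero_right vacK.zero)
next
  case (radd x y) then show ?case
    by (simp add: tmul_add_left tmul_add_right vacK.add)
next
  case (rsmult x a) then show ?case
    by (simp add: tmul_smult_left tmul_smult_right vacK_smult')
next
  case (rgen g h)
  have "tmul p (tmul (rel g h) q) = tmul (\<lambda>w. \<Sum>u\<in>{w. p w \<noteq> 0}. p u * mon u w) (tmul (rel g h) (\<lambda>w. \<Sum>v\<in>{w. q w \<noteq> 0}. q v * mon v w))"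
    using decomp[OF fp] decomp[OF fq] by simp
  also have "\<dots> = (\<lambda>w. \<Sum>u\<in>{w. p w \<noteq> 0}. p u * (\<Sum>v\<in>{w. q w \<noteq> 0}. q v * tmul (mon u) (tmul (rel g h) (mon v)) w))"
    by (simp add: tmul_sum_left tmul_sum_right tmul_smult_left tmul_smult_right sum_distrib_left)
  finally have e: "tmul p (tmul (rel g h) q) = \<dots>" .
  show ?case unfolding e
    apply (rule vacK_sum, use fp in \<open>simp add: fs_def\<close>)
    apply (rule vacK_smult')
    apply (rule vacK_sum, use fq in \<open>simp add: fs_def\<close>)
    apply (rule vacK_smult')
    apply (unfold rel_def)
    apply (rule vacK.comm)
    done
qed

lemma ib0: "ibinom a 0 = 1" by (simp add: ibinom_def)

lemma ib1: "ibinom a 1 = a" by (simp add: ibinom_def)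

lemma ib_succ: "(int r + 1) * ibinom a (Suc r) = (a - int r) * ibinom a r"
proof (cases "0 \<le> a")
  case True
  then obtain n where a: "a = int n" by (metis nonneg_eq_int)
  have "Suc r * (n choose Suc r) = (n - r) * (n choose r)"
    by (metis binomial_absorb_comp binomial_absorption mult.commute)
  then have "(int r + 1) * int (n choose Suc r) = int (n - r) * int (n choose r)"
    by (metis of_nat_Suc of_nat_mult add.commute)
  moreover have "int (n - r) * int (n choose r) = (int n - int r) * int (n choose r)"
    by (cases "r \<le> n") (auto simp: of_nat_diff binomial_eq_0)
  ultimately show ?thesis using a by (simp add: ibinom_def)
next
  case False
  define N where "N = nat (- a)"
  have a: "a = - int N" and N: "N \<ge> 1" using False by (auto simp: N_def)
  have "Suc r * ((N + r) choose Suc r) = (N + r) * ((N + r - 1) choose r)"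
    using N Suc_times_binomial[of r "N + r - 1"] by simp
  then have "(int r + 1) * int ((N + r) choose Suc r) = (int N + int r) * int ((N + r - 1) choose r)"
    by (metis of_nat_Suc of_nat_mult add.commute of_nat_add)
  then have "(-1)^r * ((int r + 1) * int ((N + r) choose Suc r)) = (-1)^r * ((int N + int r) * int ((N + r - 1) choose r))" by simp
  then show ?thesis using a N by (simp add: ibinom_def algebra_simps)
qed

abbreviation dd :: "int \<Rightarrow> nat \<Rightarrow> int" where "dd m i \<equiv> ibinom (1 - m) i"

lemma dS: "(int r + 1) * dd m (Suc r) = dd m r * dd (m + int r) 1"
proof -
  have h: "dd (m + int r) 1 = 1 - (m + int r)" by (rule ib1)
  show ?thesis unfolding h using ib_succ[of r "1 - m"] by (simp add: algebra_simps)
qed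

lemma gen_ident:
  fixes \<beta> :: "int \<Rightarrow> int \<Rightarrow> int" and e :: "int \<Rightarrow> nat \<Rightarrow> int"
  assumes e0: "\<And>t. e t 0 = 1"
    and eS: "\<And>t j. (int j + 1) * e t (Suc j) = e t j * e (t + int j) 1"
    and inv: "\<And>m k. e (m + k) 1 * \<beta> m k = dd m 1 * \<beta> (m + 1) k + dd k 1 * \<beta> m (k + 1)"
  shows "(\<Sum>i\<le>j. dd m i * dd k (j - i) * \<beta> (m + int i) (k + int (j - i))) = e (m + k) j * \<beta> m k"
proof (induction j arbitrary: m k)
  case 0
  then show ?case by (simp add: ib0 e0)
next
  case (Suc j)
  define t where "t i = dd m i * dd k (Suc j - i) * \<beta> (m + int i) (k + int (Suc j - i))" for i
  define s where "s i = dd m i * dd k (j - i) * \<beta> (m + int i) (k + int (j - i))" for i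
  have A: "(\<Sum>i\<le>Suc j. int i * t i) = (\<Sum>i\<le>j. dd m i * dd k (j - i) * (dd (m + int i) 1 * \<beta> (m + int i + 1) (k + int (j - i))))"
  proof -
    have "(\<Sum>i\<le>Suc j. int i * t i) = (\<Sum>i\<le>j. int (Suc i) * t (Suc i))"
      by (subst sum.atMost_Suc_shift) simp
    also have "\<dots> = (\<Sum>i\<le>j. dd m i * dd k (j - i) * (dd (m + int i) 1 * \<beta> (m + int i + 1) (k + int (j - i))))"
    proof (rule sum.cong)
      fix i assume "i \<in> {..j}"
      have "int (Suc i) * t (Suc i) = ((int i + 1) * dd m (Suc i)) * dd k (j - i) * \<beta> (m + int i + 1) (k + int (j - i))"
        unfolding t_def by (simp add: algebra_simps)
      also have "\<dots> = dd m i * dd k (j - i) * (dd (m + int i) 1 * \<beta> (m + int i + 1) (k + int (j - i)))"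
        unfolding dS by (simp add: algebra_simps)
      finally show "int (Suc i) * t (Suc i) = dd m i * dd k (j - i) * (dd (m + int i) 1 * \<beta> (m + int i + 1) (k + int (j - i)))" .
    qed simp
    finally show ?thesis .
  qed
  have B: "(\<Sum>i\<le>Suc j. int (Suc j - i) * t i) = (\<Sum>i\<le>j. dd m i * dd k (j - i) * (dd (k + int (j - i)) 1 * \<beta> (m + int i) (k + int (j - i) + 1)))"
  proof -
    have "(\<Sum>i\<le>Suc j. int (Suc j - i) * t i) = (\<Sum>i\<le>j. int (Suc j - i) * t i)"
      by simp
    also have "\<dots> = (\<Sum>i\<le>j. dd m i * dd k (j - i) * (dd (k + int (j - i)) 1 * \<beta> (m + int i) (k + int (j - i) + 1)))"
    proof (rule sum.cong)
      fix i assume "i \<in> {..j}"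
      then have ij: "i \<le> j" by simp
      have "int (Suc j - i) * t i = dd m i * ((int (j - i) + 1) * dd k (Suc (j - i))) * \<beta> (m + int i) (k + int (j - i) + 1)"
        unfolding t_def using ij by (simp add: algebra_simps Suc_diff_le)
      also have "\<dots> = dd m i * dd k (j - i) * (dd (k + int (j - i)) 1 * \<beta> (m + int i) (k + int (j - i) + 1))"
        unfolding dS by (simp add: algebra_simps)
      finally show "int (Suc j - i) * t i = dd m i * dd k (j - i) * (dd (k + int (j - i)) 1 * \<beta> (m + int i) (k + int (j - i) + 1))" .
    qed simp
    finally show ?thesis .
  qed
  have "(int j + 1) * (\<Sum>i\<le>Suc j. t i) = (\<Sum>i\<le>Suc j. int i * t i) + (\<Sum>i\<le>Suc j. int (Suc j - i) * t i)"
  proof -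
    have "(int j + 1) * (\<Sum>i\<le>Suc j. t i) = (\<Sum>i\<le>Suc j. (int i + int (Suc j - i)) * t i)"
      unfolding sum_distrib_left by (rule sum.cong) (auto simp: of_nat_diff)
    then show ?thesis by (simp only: distrib_right sum.distrib)
  qed
  also have "\<dots> = (\<Sum>i\<le>j. dd m i * dd k (j - i) * (e (m + k + int j) 1 * \<beta> (m + int i) (k + int (j - i))))"
    unfolding A B sum.distrib[symmetric]
  proof (rule sum.cong)
    fix i assume "i \<in> {..j}"
    then have ij: "i \<le> j" by simp
    have "e (m + int i + (k + int (j - i))) 1 * \<beta> (m + int i) (k + int (j - i)) =
        dd (m + int i) 1 * \<beta> (m + int i + 1) (k + int (j - i)) + dd (k + int (j - i)) 1 * \<beta> (m + int i) (k + int (j - i) + 1)"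
      by (rule inv)
    moreover have "m + int i + (k + int (j - i)) = m + k + int j" using ij by (simp add: of_nat_diff)
    ultimately show "dd m i * dd k (j - i) * (dd (m + int i) 1 * \<beta> (m + int i + 1) (k + int (j - i))) +
         dd m i * dd k (j - i) * (dd (k + int (j - i)) 1 * \<beta> (m + int i) (k + int (j - i) + 1)) =
         dd m i * dd k (j - i) * (e (m + k + int j) 1 * \<beta> (m + int i) (k + int (j - i)))"
      by (simp add: algebra_simps)
  qed simp
  also have "\<dots> = e (m + k + int j) 1 * (\<Sum>i\<le>j. dd m i * dd k (j - i) * \<beta> (m + int i) (k + int (j - i)))"
    unfolding sum_distrib_left by (rule sum.cong) (simp_all add: algebra_simps)
  also have "\<dots> = e (m + k + int j) 1 * e (m + k) j * \<beta> m k"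
    unfolding Suc.IH by simp
  also have "\<dots> = (int j + 1) * (e (m + k) (Suc j) * \<beta> m k)"
    using eS[where t="m + k" and j=j] by (simp add: algebra_simps)
  finally have "(int j + 1) * (\<Sum>i\<le>Suc j. t i) = (int j + 1) * (e (m + k) (Suc j) * \<beta> m k)" .
  then have "(\<Sum>i\<le>Suc j. t i) = e (m + k) (Suc j) * \<beta> m k" by simp
  then show ?case by (simp add: t_def)
qed

lemma choose2_int: "2 * int (n choose 2) = int n * (int n - 1)"
proof (induction n)
  case 0 then show ?case by simp
next
  case (Suc n)
  have "(Suc n choose 2) = (n choose 1) + (n choose 2)"
    by (metis Suc_1 binomial_Suc_Suc)
  then show ?case using Suc by (simp add: algebra_simps)
qed

lemma choose3_int: "6 * int (n choose 3) = int n * (int n - 1) * (int n - 2)"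
proof (induction n)
  case 0 then show ?case by simp
next
  case (Suc n)
  have "(Suc n choose 3) = (n choose 2) + (n choose 3)"
    using binomial_Suc_Suc[of n 2] by (simp add: numeral_3_eq_3)
  then have "6 * int (Suc n choose 3) = 3 * (2 * int (n choose 2)) + 6 * int (n choose 3)" by simp
  then show ?case using Suc choose2_int[of n] by (simp add: algebra_simps)
qed

lemma ib3: "6 * ibinom x 3 = x * (x - 1) * (x - 2)"
proof (cases "0 \<le> x")
  case True
  then show ?thesis using choose3_int[of "nat x"] by (simp add: ibinom_def)
next
  case False
  define N where "N = nat (- x)"
  have x: "x = - int N" using False by (simp add: N_def)
  have "N + 3 - 1 = N + 2" by simp
  then have "ibinom x 3 = - int ((N + 2) choose 3)" using False x by (simp add: ibinom_def)
  then show ?thesis using choose3_int[of "N + 2"] x by (simp add: algebra_simps)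
qed

definition beta2 :: "int \<Rightarrow> int \<Rightarrow> int" where
  "beta2 x y = (if x + y = 0 then ibinom (x + 1) 3 else 0)"

lemma ident1: "(\<Sum>i\<le>j. dd m i * dd k (j - i) * ((m + int i) - (k + int (j - i)))) = dd (m + k) j * (m - k)"
proof -
  have "(\<Sum>i\<le>j. dd m i * dd k (j - i) * (\<lambda>x y. x - y) (m + int i) (k + int (j - i))) = dd (m + k) j * (\<lambda>x y. x - y) m k"
  proof (rule gen_ident)
    show "dd t 0 = 1" for t by (rule ib0)
    show "(int j + 1) * dd t (Suc j) = dd t j * dd (t + int j) 1" for t j by (rule dS)
    show "dd (m + k) 1 * (m - k) = dd m 1 * (m + 1 - k) + dd k 1 * (m - (k + 1))" for m k
      unfolding ib1 by (simp add: algebra_simps)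
  qed
  then show ?thesis by simp
qed

lemma ident2: "(\<Sum>i\<le>j. dd m i * dd k (j - i) * beta2 (m + int i) (k + int (j - i))) = (if j = 0 then 1 else 0) * beta2 m k"
proof (rule gen_ident)
  show "(if (0::nat) = 0 then 1 else 0) = (1::int)" by simp
  show "(int j + 1) * (if Suc j = 0 then 1 else 0) = (if j = 0 then 1 else 0) * (if (1::nat) = 0 then 1 else (0::int))" for j by simp
  show "(if (1::nat) = 0 then 1 else 0) * beta2 m k = dd m 1 * beta2 (m + 1) k + dd k 1 * beta2 m (k + 1)" for m k
  proof (cases "m + k + 1 = 0")
    case True
    then have k: "k = - 1 - m" by simp
    have "6 * (dd m 1 * beta2 (m + 1) k + dd k 1 * beta2 m (k + 1)) = (1 - m) * (6 * ibinom (m + 2) 3) + (2 + m) * (6 * ibinom (m + 1) 3)"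
      unfolding ib1 beta2_def k by (simp add: algebra_simps)
    also have "\<dots> = 0" unfolding ib3 by (simp add: algebra_simps)
    finally show ?thesis by simp
  next
    case False
    then show ?thesis by (simp add: beta2_def)
  qed
qed


lemma act1g_L: "act1g i (L m) = (\<lambda>w. of_int (dd m i) * mon [L (m + int i)] w :: 'a::field)"
  by (simp add: tsmult_eq)

lemma act1g_C: "act1g i C = (if i = 0 then mon [C] else (\<lambda>w. 0 :: 'a::field))"
  by simp

lemma act1w_pair: "act1w b [g, h] = (\<lambda>w. \<Sum>i\<le>b. tmul (act1g i g) (act1g (b - i) h) w :: 'a::field)"
proof -
  have "act1w b [g, h] = (\<lambda>w. \<Sum>i\<le>b. tmul (act1g i g) (act1w (b - i) [h]) w :: 'a)"
    by (rule act1w.simps(2))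
  then show ?thesis by (simp only: act1w_single)
qed

lemma act1w_LL: "act1w b [L m, L k] = (\<lambda>w. \<Sum>i\<le>b. of_int (dd m i * dd k (b - i)) * mon [L (m + int i), L (k + int (b - i))] w :: 'a::field)"
  unfolding act1w_pair act1g_L by (simp add: tmul_smult_left tmul_smult_right tmul_mon_mon mult.assoc)

lemma vbr_LL: "vbr (L x) (L y) = (\<lambda>w. of_int (x - y) * mon [L (x + y)] w + (1/2 * of_int (beta2 x y)) * mon [C] w :: 'a::field)"
  by (rule ext) (simp add: beta2_def)

lemma act1_vbr: "act1 b (vbr (L m) (L k)) = (\<lambda>w. of_int ((m - k) * dd (m + k) b) * mon [L (m + k + int b)] w
    + (1/2 * of_int (beta2 m k)) * (if b = 0 then mon [C] w else 0) :: 'a::field)"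
proof -
  have "act1 b (vbr (L m) (L k)) = (\<lambda>w. act1 b (\<lambda>w. of_int (m - k) * mon [L (m + k)] w) w + act1 b (\<lambda>w. (1/2 * of_int (beta2 m k)) * mon [C] w) w :: 'a)"
    unfolding vbr_LL by (rule act1_add) (rule fs_smult fs_mon)+
  also have "\<dots> = (\<lambda>w. of_int (m - k) * act1w b [L (m + k)] w + (1/2 * of_int (beta2 m k)) * act1w b [C] w)"
    by (simp only: act1_smult[OF fs_mon] act1_mon)
  finally show ?thesis by (simp only: act1w_single act1g_L act1g_C) (auto simp: algebra_simps)
qed

lemma sum_rev_atMost: "(\<Sum>i\<le>(b::nat). f i) = (\<Sum>i\<le>b. f (b - i))"
  using sum.atLeastAtMost_rev[of f 0 b] by (simp add: atLeast0AtMost)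

lemma act1_rel_LL: "act1 b (rel (L m) (L k)) =
   (\<lambda>w. \<Sum>i\<le>b. of_int (dd m i * dd k (b - i)) * rel (L (m + int i)) (L (k + int (b - i))) w :: 'a::field)"
proof
  fix w
  define c where "c i = dd m i * dd k (b - i)" for i
  have "act1 b (rel (L m) (L k)) w = act1w b [L m, L k] w - act1w b [L k, L m] w - (act1 b (vbr (L m) (L k)) w :: 'a)"
    unfolding rel_def by (simp only: act1_diff fs_diff fs_mon fs_vbr act1_mon)
  moreover have "act1w b [L m, L k] w = (\<Sum>i\<le>b. of_int (c i) * (mon [L (m + int i), L (k + int (b - i))] w :: 'a))"
    by (simp only: act1w_LL c_def)
  moreover have "act1w b [L k, L m] w = (\<Sum>i\<le>b. of_int (c i) * (mon [L (k + int (b - i)), L (m + int i)] w :: 'a))"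
  proof -
    have "act1w b [L k, L m] w = (\<Sum>i\<le>b. of_int (dd k i * dd m (b - i)) * (mon [L (k + int i), L (m + int (b - i))] w :: 'a))"
      by (simp only: act1w_LL)
    also have "\<dots> = (\<Sum>i\<le>b. of_int (dd k (b - i) * dd m (b - (b - i))) * (mon [L (k + int (b - i)), L (m + int (b - (b - i)))] w :: 'a))"
      by (rule sum_rev_atMost)
    also have "\<dots> = (\<Sum>i\<le>b. of_int (c i) * (mon [L (k + int (b - i)), L (m + int i)] w :: 'a))"
      by (rule sum.cong) (auto simp: c_def mult.commute)
    finally show ?thesis .
  qed
  moreover have "(\<Sum>i\<le>b. of_int (c i) * vbr (L (m + int i)) (L (k + int (b - i))) w) =
      of_int (\<Sum>i\<le>b. c i * ((m + int i) - (k + int (b - i)))) * (mon [L (m + k + int b)] w :: 'a)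
      + (1/2 * of_int (\<Sum>i\<le>b. c i * beta2 (m + int i) (k + int (b - i)))) * mon [C] w"
  proof -
    have "(\<Sum>i\<le>b. of_int (c i) * vbr (L (m + int i)) (L (k + int (b - i))) w) =
       (\<Sum>i\<le>b. of_int (c i * ((m + int i) - (k + int (b - i)))) * (mon [L (m + k + int b)] w :: 'a)
          + (1/2 * of_int (c i * beta2 (m + int i) (k + int (b - i)))) * mon [C] w)"
      unfolding vbr_LL by (rule sum.cong) (auto simp: algebra_simps of_nat_diff)
    then show ?thesis by (simp add: sum.distrib sum_distrib_left sum_distrib_right mult.assoc)
  qed
  moreover have "act1 b (vbr (L m) (L k)) w =
      of_int (\<Sum>i\<le>b. c i * ((m + int i) - (k + int (b - i)))) * (mon [L (m + k + int b)] w :: 'a)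
      + (1/2 * of_int (\<Sum>i\<le>b. c i * beta2 (m + int i) (k + int (b - i)))) * mon [C] w"
    unfolding act1_vbr c_def
    using ident1[of m k b] ident2[of m k b] by (simp add: mult.assoc mult.commute)
  ultimately show "act1 b (rel (L m) (L k)) w = (\<Sum>i\<le>b. of_int (dd m i * dd k (b - i)) * rel (L (m + int i)) (L (k + int (b - i))) w :: 'a)"
    unfolding rel_def c_def
    by (simp add: right_diff_distrib sum_subtractf)
qed

lemma act1w_CL: "act1w b [C, L k] = (\<lambda>w. of_int (dd k b) * mon [C, L (k + int b)] w :: 'a::field)"
proof
  fix w
  have "act1w b [C, L k] w = (\<Sum>i\<le>b. if i = 0 then of_int (dd k b) * mon [C, L (k + int b)] w else (0::'a))"
    unfolding act1w_pair
    by (rule sum.cong) (auto simp: tsmult_eq tmul_smult_right tmul_mon_mon tmul_zero_left)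
  then show "act1w b [C, L k] w = (of_int (dd k b) * mon [C, L (k + int b)] w :: 'a)" by simp
qed

lemma act1w_LC: "act1w b [L k, C] = (\<lambda>w. of_int (dd k b) * mon [L (k + int b), C] w :: 'a::field)"
proof
  fix w
  have "act1w b [L k, C] w = (\<Sum>i\<le>b. if i = b then of_int (dd k b) * mon [L (k + int b), C] w else (0::'a))"
    unfolding act1w_pair
    by (rule sum.cong) (auto simp: tsmult_eq tmul_smult_left tmul_mon_mon tmul_zero_right)
  then show "act1w b [L k, C] w = (of_int (dd k b) * mon [L (k + int b), C] w :: 'a)" by simp
qed

lemma act1_rel: "act1 b (rel g h :: 'a::field tens) \<in> relspan"
proof (cases g)
  case (L m)
  show ?thesis
  proof (cases h)
    case (L k)
    show ?thesis unfolding \<open>g = L m\<close> \<open>h = L k\<close> act1_rel_LL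
      by (intro relspan_sum finite_atMost rsmult rgen)
  next
    case C
    have "act1 b (rel (L m) C) = (\<lambda>w. of_int (dd m b) * rel (L (m + int b)) C w :: 'a)"
    proof -
      have "act1 b (rel (L m) C) = (\<lambda>w. act1w b [L m, C] w - act1w b [C, L m] w :: 'a)"
        unfolding rel_def by (simp add: act1_diff fs_mon act1_mon del: act1w.simps)
      then show ?thesis unfolding act1w_LC act1w_CL rel_def by (simp add: algebra_simps)
    qed
    then show ?thesis using \<open>g = L m\<close> C by (simp add: rsmult rgen)
  qed
next
  case C
  show ?thesis
  proof (cases h)
    case (L k)
    have "act1 b (rel C (L k)) = (\<lambda>w. of_int (dd k b) * rel C (L (k + int b)) w :: 'a)"
    proof -
      have "act1 b (rel C (L k)) = (\<lambda>w. act1w b [C, L k] w - act1w b [L k, C] w :: 'a)"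
        unfolding rel_def by (simp add: act1_diff fs_mon act1_mon del: act1w.simps)
      then show ?thesis unfolding act1w_LC act1w_CL rel_def by (simp add: algebra_simps)
    qed
    then show ?thesis using \<open>g = C\<close> L by (simp add: rsmult rgen)
  next
    case C
    have "rel C C = (\<lambda>w. 0 :: 'a)" unfolding rel_def by simp
    then show ?thesis using \<open>g = C\<close> C by (simp add: act1_zero rzero)
  qed
qed

lemma left_central: "fs p \<Longrightarrow> tmul p (\<lambda>w. mon [C] w - c * mon [] w) \<in> vacK c"
proof -
  assume fp: "fs p"
  have "tmul p (\<lambda>w. mon [C] w - c * mon [] w) = tmul (\<lambda>w. \<Sum>u\<in>{w. p w \<noteq> 0}. p u * mon u w) (\<lambda>w. mon [C] w - c * mon [] w)"
    using decomp[OF fp] by simp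
  also have "\<dots> = (\<lambda>w. \<Sum>u\<in>{w. p w \<noteq> 0}. p u * tmul (mon u) (\<lambda>w. mon [C] w - c * mon [] w) w)"
    by (simp add: tmul_sum_left tmul_smult_left)
  finally show ?thesis
    using fp by (auto simp: fs_def intro!: vacK_sum vacK_smult' vacK.central)
qed

lemma left_annih: "fs p \<Longrightarrow> n \<ge> -1 \<Longrightarrow> tmul p (mon [L n]) \<in> vacK c"
proof -
  assume fp: "fs p" and n: "n \<ge> -1"
  have "tmul p (mon [L n]) = tmul (\<lambda>w. \<Sum>u\<in>{w. p w \<noteq> 0}. p u * mon u w) (mon [L n])"
    using decomp[OF fp] by simp
  also have "\<dots> = (\<lambda>w. \<Sum>u\<in>{w. p w \<noteq> 0}. p u * mon (u @ [L n]) w)"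
    by (simp add: tmul_sum_left tmul_smult_left tmul_mon_mon)
  finally show ?thesis
    using fp n by (auto simp: fs_def intro!: vacK_sum vacK_smult' vacK.annih)
qed

lemma vacK_inv: "z \<in> vacK c \<Longrightarrow> act1 r z \<in> vacK c"
proof (induction arbitrary: r rule: vacK.induct)
  case zero then show ?case by (simp add: act1_zero vacK.zero)
next
  case (add x y) then show ?case by (simp add: act1_add vacK_fs vacK.add)
next
  case (smult x a) then show ?case by (simp add: tsmult_eq act1_smult vacK_fs vacK_smult')
next
  case (comm u g h v)
  have e: "act1 r (tmul (mon u) (tmul (rel g h) (mon v))) =
     (\<lambda>w. \<Sum>i\<le>r. \<Sum>j\<le>i. tmul (act1w (r - i) u) (tmul (act1 (i - j) (rel g h)) (act1w j v)) w)"
    by (simp add: leibniz fs_mon fs_tmul fs_rel act1_mon tmul_sum_right)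
  show ?case
    unfolding rel_def[symmetric] e
    by (intro vacK_sum finite_atMost sandwich act1_rel fs_act1w)
next
  case (central u)
  have "act1 r (tmul (mon u) (\<lambda>w. mon [C] w - c * mon [] w)) =
     (\<lambda>w. \<Sum>i\<le>r. tmul (act1w (r - i) u) (act1 i (\<lambda>w. mon [C] w - c * mon [] w)) w)"
    by (simp add: leibniz fs_mon fs_diff fs_smult act1_mon)
  moreover have "tmul (act1w (r - i) u) (act1 i (\<lambda>w. mon [C] w - c * mon [] w)) \<in> vacK c" for i
  proof (cases "i = 0")
    case True
    have "act1 i (\<lambda>w. mon [C] w - c * mon [] w) = (\<lambda>w. mon [C] w - c * mon [] w)"
      using True by (simp add: act1_diff act1_smult fs_mon fs_smult act1_mon act1w_single act1w_nil del: act1w.simps)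
    then show ?thesis by (simp add: left_central fs_act1w)
  next
    case False
    have "act1 i (\<lambda>w. mon [C] w - c * mon [] w) = (\<lambda>w. 0)"
      using False by (simp add: act1_diff act1_smult fs_mon fs_smult act1_mon act1w_single act1w_nil del: act1w.simps)
    then show ?thesis by (simp add: tmul_zero_right vacK.zero)
  qed
  ultimately show ?case by (simp add: vacK_sum)
next
  case (annih n u)
  have "act1 r (mon (u @ [L n])) = (\<lambda>w. \<Sum>i\<le>r. of_int (ibinom (1 - n) i) * tmul (act1w (r - i) u) (mon [L (n + int i)]) w :: 'a)"
    by (simp add: act1_mon leibniz_w act1w_single tsmult_eq tmul_smult_right del: act1w.simps)
  moreover have "(\<lambda>w. \<Sum>i\<le>r. of_int (ibinom (1 - n) i) * tmul (act1w (r - i) u) (mon [L (n + int i)]) w) \<in> vacK c"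
    using annih by (intro vacK_sum finite_atMost vacK_smult' left_annih fs_act1w) auto
  ultimately show ?case by simp
qed

definition good :: "vgen \<Rightarrow> bool" where
  "good g \<longleftrightarrow> (\<exists>k. g = L k \<and> k \<le> 1)"

definition goodw :: "vgen list \<Rightarrow> bool" where
  "goodw w \<longleftrightarrow> (\<forall>g\<in>set w. good g)"

lemma wdeg_simps [simp]: "wdeg [] = 0" "wdeg (g # w) = gdeg g + wdeg w" "wdeg (u @ v) = wdeg u + wdeg v"
  by (simp_all add: wdeg_def)

lemma goodw_simps [simp]: "goodw []" "goodw (g # w) \<longleftrightarrow> good g \<and> goodw w" "goodw (u @ v) \<longleftrightarrow> goodw u \<and> goodw v"
  by (auto simp: goodw_def)

inductive_set gsp :: "nat \<Rightarrow> int \<Rightarrow> 'a::field tens set" for l d where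
  gz: "(\<lambda>w. 0) \<in> gsp l d"
| ga: "x \<in> gsp l d \<Longrightarrow> y \<in> gsp l d \<Longrightarrow> (\<lambda>w. x w + y w) \<in> gsp l d"
| gs: "x \<in> gsp l d \<Longrightarrow> (\<lambda>w. a * x w) \<in> gsp l d"
| gm: "goodw v \<Longrightarrow> length v = l \<Longrightarrow> wdeg v = d \<Longrightarrow> mon v \<in> gsp l d"

lemma gsp_sum: "finite S \<Longrightarrow> (\<And>i. i \<in> S \<Longrightarrow> f i \<in> gsp l d) \<Longrightarrow> (\<lambda>w. \<Sum>i\<in>S. f i w) \<in> gsp l d"
proof (induction S rule: finite_induct)
  case empty then show ?case by (simp add: gz)
next
  case (insert a F)
  then show ?case using ga[of "f a" l d "\<lambda>w. \<Sum>i\<in>F. f i w"] by simp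
qed

lemma gsp_cons: "y \<in> gsp l d \<Longrightarrow> k \<le> 1 \<Longrightarrow> tmul (mon [L k]) y \<in> gsp (Suc l) (d - k)"
proof (induction rule: gsp.induct)
  case gz then show ?case by (simp add: tmul_zero_right gsp.gz)
next
  case (ga x y) then show ?case by (simp add: tmul_add_right gsp.ga)
next
  case (gs x a) then show ?case by (simp add: tmul_smult_right gsp.gs)
next
  case (gm v) then show ?case by (simp add: tmul_mon_mon gsp.gm good_def)
qed

lemma act1w_good: "goodw v \<Longrightarrow> (act1w r v :: 'a::field tens) \<in> gsp (length v) (wdeg v - int r)"
proof (induction v arbitrary: r)
  case Nil
  show ?case
  proof (cases "r = 0")
    case True then show ?thesis by (simp add: gsp.gm)
  next
    case False then show ?thesis by (simp add: gsp.gz)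
  qed
next
  case (Cons g v)
  then obtain m where g: "g = L m" and m: "m \<le> 1" and gv: "goodw v" by (auto simp: good_def)
  have "(\<lambda>w. tmul (act1g i g) (act1w (r - i) v) w :: 'a) \<in> gsp (length (g # v)) (wdeg (g # v) - int r)"
    if i: "i \<in> {..r}" for i
  proof (cases "m + int i \<le> 1")
    case True
    have "tmul (mon [L (m + int i)]) (act1w (r - i) v :: 'a tens) \<in> gsp (Suc (length v)) (wdeg v - int (r - i) - (m + int i))"
      by (rule gsp_cons[OF Cons.IH[OF gv] True])
    moreover have "wdeg v - int (r - i) - (m + int i) = wdeg (g # v) - int r"
      using i g by (simp add: of_nat_diff)
    ultimately show ?thesis
      using g by (simp add: tsmult_eq tmul_smult_left gsp.gs)
  next
    case False
    then have "dd m i = 0" using m by (simp add: ibinom_def binomial_eq_0)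
    then show ?thesis using g by (simp add: tsmult_eq tmul_smult_left tmul_zero_left gsp.gz)
  qed
  then have "(\<lambda>w. \<Sum>i\<le>r. tmul (act1g i g) (act1w (r-i) v) w :: 'a) \<in> gsp (length (g # v)) (wdeg (g # v) - int r)"
    by (intro gsp_sum) auto
  then show ?case by (simp only: act1w.simps(2))
qed

lemma comm_expand: "tmul (mon a) (tmul (rel g h) (mon b)) =
   (\<lambda>w. mon (a @ [g, h] @ b) w - mon (a @ [h, g] @ b) w - tmul (mon a) (tmul (vbr g h) (mon b)) w :: 'a::field)"
  unfolding rel_def by (simp add: tmul_diff_left tmul_diff_right tmul_mon_mon)

lemma comm_in: "tmul (mon a) (tmul (rel g h) (mon b)) \<in> vacK c"
  unfolding rel_def by (rule vacK.comm)

lemma swapLL: "(\<lambda>w. mon (a @ [L x, L y] @ b) w - mon (a @ [L y, L x] @ b) w -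
    (of_int (x - y) * mon (a @ [L (x + y)] @ b) w + (1/2 * of_int (beta2 x y)) * mon (a @ [C] @ b) w)) \<in> vacK (c::'a::field)"
proof -
  have "tmul (mon a) (tmul (vbr (L x) (L y)) (mon b)) =
     (\<lambda>w. of_int (x - y) * mon (a @ [L (x + y)] @ b) w + (1/2 * of_int (beta2 x y)) * mon (a @ [C] @ b) w :: 'a)"
    unfolding vbr_LL by (simp only: tmul_add_left tmul_add_right tmul_smult_left tmul_smult_right tmul_mon_mon)
  then show ?thesis using comm_in[of a "L x" "L y" b c] unfolding comm_expand by simp
qed

lemma swapC: "(\<lambda>w. mon (a @ [C, h] @ b) w - mon (a @ [h, C] @ b) w) \<in> vacK (c::'a::field)"
proof -
  have "vbr C h = (\<lambda>w. 0 :: 'a)" by simp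
  then show ?thesis using comm_in[of a C h b c] unfolding comm_expand by (simp add: tmul_zero_left tmul_zero_right)
qed

lemma vacK_shift: "(\<lambda>w. x w - y w) \<in> vacK c \<Longrightarrow> y \<in> vacK c \<Longrightarrow> x \<in> vacK c"
  using vacK.add[of "\<lambda>w. x w - y w" c y] by simp

lemma Q_lemma: "goodw v \<Longrightarrow> v \<noteq> [] \<Longrightarrow> wdeg v \<le> 1 \<Longrightarrow> mon v \<in> vacK (c::'a::field)"
proof (induction "length v" arbitrary: v rule: less_induct)
  case less
  have inner: "goodw (a @ [L 1] @ b) \<Longrightarrow> length (a @ [L 1] @ b) = length v \<Longrightarrow> wdeg (a @ [L 1] @ b) \<le> 1 \<Longrightarrow>
     mon (a @ [L 1] @ b) \<in> vacK c" for a b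
  proof (induction b arbitrary: a)
    case Nil
    then show ?case using vacK.annih[of 1 a c] by simp
  next
    case (Cons h b')
    then obtain k where h: "h = L k" and k: "k \<le> 1" by (auto simp: good_def)
    show ?case
    proof (cases "k = 1")
      case True
      then show ?thesis using Cons.IH[of "a @ [L 1]"] Cons.prems h by simp
    next
      case False
      have A: "mon (a @ [L k, L 1] @ b') \<in> vacK c"
        using Cons.IH[of "a @ [L k]"] Cons.prems h by simp
      have B: "mon (a @ [L (1 + k)] @ b') \<in> vacK c"
        using less.hyps[of "a @ [L (1 + k)] @ b'"] Cons.prems h k False by (simp add: good_def)
      have b0: "beta2 1 k = 0" by (simp add: beta2_def ibinom_def)
      have "(\<lambda>w. mon (a @ [L 1, L k] @ b') w - (mon (a @ [L k, L 1] @ b') w + of_int (1 - k) * mon (a @ [L (1 + k)] @ b') w)) \<in> vacK c"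
        using swapLL[of a 1 k b' c] b0 by (simp add: algebra_simps)
      moreover have "(\<lambda>w. mon (a @ [L k, L 1] @ b') w + of_int (1 - k) * mon (a @ [L (1 + k)] @ b') w) \<in> vacK c"
        using A B by (intro vacK.add vacK_smult')
      ultimately show ?thesis using h by (simp add: vacK_shift)
    qed
  qed
  obtain u g where v: "v = u @ [g]" using less.prems by (metis rev_exhaust)
  obtain k where g: "g = L k" and k: "k \<le> 1" using less.prems v by (auto simp: good_def)
  show ?case
  proof (cases "k \<ge> -1")
    case True
    then show ?thesis using v g vacK.annih[of k u c] by simp
  next
    case False
    have "\<exists>x\<in>set u. x = L 1"
    proof (rule ccontr)
      assume no: "\<not> (\<exists>x\<in>set u. x = L 1)"
      have "\<forall>x\<in>set u. gdeg x \<ge> 0"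
      proof
        fix x assume xu: "x \<in> set u"
        then obtain k' where "x = L k'" "k' \<le> 1" using less.prems v by (auto simp: goodw_def good_def)
        moreover have "x \<noteq> L 1" using no xu by auto
        ultimately show "gdeg x \<ge> 0" by simp
      qed
      then have "wdeg u \<ge> 0" unfolding wdeg_def by (induction u) auto
      then show False using less.prems v g False by simp
    qed
    then obtain a b where u: "u = a @ L 1 # b" by (metis split_list)
    show ?thesis using inner[of a "b @ [g]"] less.prems v u by simp
  qed
qed

lemma gsp_vacK: "y \<in> gsp l d \<Longrightarrow> l \<ge> 1 \<Longrightarrow> d \<le> 1 \<Longrightarrow> y \<in> vacK (c::'a::field)"
proof (induction rule: gsp.induct)
  case gz then show ?case by (simp add: vacK.zero)
next
  case (ga x y) then show ?case by (simp add: vacK.add)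
next
  case (gs x a) then show ?case by (simp add: vacK_smult')
next
  case (gm v) then show ?case by (intro Q_lemma) auto
qed

inductive_set red :: "'a::field \<Rightarrow> int \<Rightarrow> 'a tens set" for c d where
  rg: "goodw v \<Longrightarrow> wdeg v = d \<Longrightarrow> mon v \<in> red c d"
| rk: "z \<in> vacK c \<Longrightarrow> z \<in> red c d"
| ra: "x \<in> red c d \<Longrightarrow> y \<in> red c d \<Longrightarrow> (\<lambda>w. x w + y w) \<in> red c d"
| rs: "x \<in> red c d \<Longrightarrow> (\<lambda>w. a * x w) \<in> red c d"

lemma red_shift: "(\<lambda>w. x w - y w) \<in> vacK c \<Longrightarrow> y \<in> red c d \<Longrightarrow> x \<in> red c d"
  using ra[OF rk[of "\<lambda>w. x w - y w" c d], of y] by simp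

lemma reduce: "mon w \<in> red (c::'a::field) (wdeg w)"
proof (induction "length w" arbitrary: w rule: less_induct)
  case less
  show ?case
  proof (cases "goodw w")
    case True then show ?thesis by (simp add: rg)
  next
    case False
    then have "\<exists>x\<in>set w. \<not> good x" by (simp add: goodw_def)
    then obtain a g b where w: "w = a @ g # b" and g: "\<not> good g" and b: "\<forall>z\<in>set b. \<not> \<not> good z"
      using split_list_last_prop[of w "\<lambda>x. \<not> good x"] by blast
    have inner: "goodw b \<Longrightarrow> length (a @ g # b) = length w \<Longrightarrow> mon (a @ g # b) \<in> red c (wdeg (a @ g # b))" for a b
    proof (induction b arbitrary: a)
      case Nil
      show ?case
      proof (cases g)
        case C
        have cen: "(\<lambda>w. mon (a @ [C]) w - c * mon a w) \<in> vacK c"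
          using vacK.central[of a c] by (simp add: tmul_diff_right tmul_smult_right tmul_mon_mon)
        have "mon a \<in> red c (wdeg a)" using less.hyps[of a] Nil.prems by simp
        then have "(\<lambda>w. c * mon a w) \<in> red c (wdeg (a @ [g]))" using C by (simp add: rs)
        then show ?thesis using red_shift[OF cen] C by simp
      next
        case (L m)
        then have "m \<ge> -1" using g by (simp add: good_def)
        then show ?thesis using L vacK.annih[of m a c] by (simp add: rk)
      qed
    next
      case (Cons h b')
      then obtain k where h: "h = L k" and k: "k \<le> 1" and gb': "goodw b'" by (auto simp: good_def)
      have IH2: "mon ((a @ [h]) @ g # b') \<in> red c (wdeg ((a @ [h]) @ g # b'))"
        using Cons.IH[of "a @ [h]"] Cons.prems gb' by simp
      show ?case
      proof (cases g)
        case C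
        have "(\<lambda>w. mon (a @ [C, L k] @ b') w - mon (a @ [L k, C] @ b') w) \<in> vacK c" by (rule swapC)
        then show ?thesis using red_shift IH2 C h by simp
      next
        case (L m)
        have D: "(\<lambda>w. mon (a @ [L m, L k] @ b') w - (mon (a @ [L k, L m] @ b') w +
            (of_int (m - k) * mon (a @ [L (m + k)] @ b') w + (1/2 * of_int (beta2 m k)) * mon (a @ [C] @ b') w))) \<in> vacK c"
          using swapLL[of a m k b' c] by (simp add: algebra_simps)
        let ?d = "wdeg (a @ g # h # b')"
        have Y1: "mon (a @ [L k, L m] @ b') \<in> red c ?d" using IH2 L h by (simp add: algebra_simps)
        have "mon (a @ [L (m + k)] @ b') \<in> red c ?d"
          using less.hyps[of "a @ [L (m + k)] @ b'"] Cons.prems L h by (simp add: algebra_simps)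
        then have Y2: "(\<lambda>w. of_int (m - k) * mon (a @ [L (m + k)] @ b') w) \<in> red c ?d" by (rule rs)
        have Y3: "(\<lambda>w. (1/2 * of_int (beta2 m k)) * mon (a @ [C] @ b') w) \<in> red c ?d"
        proof (cases "m + k = 0")
          case True
          then have "mon (a @ [C] @ b') \<in> red c ?d"
            using less.hyps[of "a @ [C] @ b'"] Cons.prems L h by (simp add: algebra_simps)
          then show ?thesis by (rule rs)
        next
          case False
          then have "(\<lambda>w. (1/2 * of_int (beta2 m k)) * mon (a @ [C] @ b') w) = (\<lambda>w. 0 :: 'a)"
            by (simp add: beta2_def)
          then show ?thesis by (simp add: rk vacK.zero)
        qed
        have "(\<lambda>w. mon (a @ [L k, L m] @ b') w +
            (of_int (m - k) * mon (a @ [L (m + k)] @ b') w + (1/2 * of_int (beta2 m k)) * mon (a @ [C] @ b') w)) \<in> red c ?d"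
          using Y1 Y2 Y3 by (intro ra) simp_all
        then show ?thesis using red_shift[OF D] L h by simp
      qed
    qed
    show ?thesis using inner[of b a] b w by (simp add: goodw_def)
  qed
qed

lemma red_fs: "x \<in> red c d \<Longrightarrow> fs x"
  by (induction rule: red.induct) (auto intro: fs_mon vacK_fs fs_add fs_smult)

lemma red_act: "x \<in> red c (int n) \<Longrightarrow> n \<ge> 1 \<Longrightarrow> act1 n x \<in> vacK c"
proof (induction rule: red.induct)
  case (rg v)
  have "v \<noteq> []" using rg by auto
  then have "length v \<ge> 1" by (cases v) auto
  moreover have "(act1w n v :: 'a tens) \<in> gsp (length v) (wdeg v - int n)" by (rule act1w_good[OF rg.hyps(1)])
  ultimately have "(act1w n v :: 'a tens) \<in> vacK c" using rg by (intro gsp_vacK[of _ "length v" 0]) auto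
  then show ?case by (simp add: act1_mon)
next
  case (rk z) then show ?case by (simp add: vacK_inv)
next
  case (ra x y) then show ?case by (simp add: act1_add red_fs vacK.add)
next
  case (rs x a) then show ?case by (simp add: act1_smult red_fs vacK_smult')
qed

lemma red_sum: "finite S \<Longrightarrow> (\<And>i. i \<in> S \<Longrightarrow> f i \<in> red c d) \<Longrightarrow> (\<lambda>w. \<Sum>i\<in>S. f i w) \<in> red c d"
proof (induction S rule: finite_induct)
  case empty then show ?case by (simp add: rk vacK.zero)
next
  case (insert a F)
  then show ?case using ra[of "f a" c d "\<lambda>w. \<Sum>i\<in>F. f i w"] by simp
qed

theorem lemma5p6:
  fixes c :: "'a::field" and p :: nat and n :: nat and x :: "'a tens"
  assumes "prime p" and "odd p" and "CHAR('a) = p"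
    and "alg_closed_type TYPE('a)"
    and "n \<ge> 1"
    and "homog (int n) x"
  shows "act1 n x \<in> vacK c"
proof -
  have fx: "fs x" and deg: "\<And>w. x w \<noteq> 0 \<Longrightarrow> wdeg w = int n"
    using assms(6) by (auto simp: homog_def fs_def)
  have mu: "mon u \<in> red c (int n)" if "x u \<noteq> 0" for u
    using reduce[of u c] deg[OF that] by simp
  have "(\<lambda>w. \<Sum>u\<in>{w. x w \<noteq> 0}. x u * mon u w) \<in> red c (int n)"
    using fx by (intro red_sum rs mu) (auto simp: fs_def)
  then have "x \<in> red c (int n)" using decomp[OF fx] by simp
  then show ?thesis using assms(5) by (rule red_act)
qed

end
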